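(* Let $\mathcal{A}$ be a finite-dimensional $C^*$-algebra with a faithful trace $\tau$, and let $\{a_j\}_{j=1}^m$ be an orthonormal basis of $\mathcal{A}$ with respect to $\tau$. Then \[ \sum_{j=1}^m Ja_jJ\otimes a_j\geq 0 \] in $\mathcal{A}'\otimes\mathcal{A}$.
   Context: $L^2(\mathcal{A},\tau)$ is the GNS Hilbert space of $\tau$ with cyclic vacuum vector $\Omega$ and inner product $\langle a\Omega,b\Omega\rangle=\tau(b^*a)$; $\mathcal{A}$ acts on it by left multiplication, and $\mathcal{A}'$ is the commutant. $J$ is the modular conjugation, the antiunitary $J(a\Omega)=a^*\Omega$, so that $J\mathcal{A}J=\mathcal{A}'$. Orthonormality is with respect to $\langle a,b\rangle=\tau(b^*a)$. *)

theory Defs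
  imports "HOL-Analysis.Analysis" "HOL-Library.Complex_Order"
begin

text \<open>Finite-dimensional C*-algebras are realised concretely as *-subalgebras of
  the n x n complex matrices (every finite-dimensional C*-algebra is *-isomorphic to one).\<close>

type_synonym 'n cmat = "complex ^ 'n ^ 'n"

definition madj :: "'n::finite cmat \<Rightarrow> 'n cmat" where
  "madj M = (\<chi> i j. cnj (M $ j $ i))"

definition star_subalgebra :: "'n::finite cmat set \<Rightarrow> bool" where
  "star_subalgebra A \<longleftrightarrow> 0 \<in> A \<and>
     (\<forall>x\<in>A. \<forall>y\<in>A. x + y \<in> A \<and> x ** y \<in> A) \<and>
     (\<forall>c. \<forall>x\<in>A. (\<chi> i j. c * x $ i $ j) \<in> A) \<and>
     (\<forall>x\<in>A. madj x \<in> A)"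

definition faithful_trace :: "'n::finite cmat set \<Rightarrow> ('n cmat \<Rightarrow> complex) \<Rightarrow> bool" where
  "faithful_trace A \<tau> \<longleftrightarrow>
     (\<forall>x\<in>A. \<forall>y\<in>A. \<tau> (x + y) = \<tau> x + \<tau> y) \<and>
     (\<forall>c. \<forall>x\<in>A. \<tau> (\<chi> i j. c * x $ i $ j) = c * \<tau> x) \<and>
     (\<forall>x\<in>A. \<forall>y\<in>A. \<tau> (x ** y) = \<tau> (y ** x)) \<and>
     (\<forall>x\<in>A. 0 \<le> \<tau> (madj x ** x)) \<and>
     (\<forall>x\<in>A. \<tau> (madj x ** x) = 0 \<longrightarrow> x = 0)"

text \<open>GNS inner product on L^2(A,tau): <a Omega, b Omega> = tau(b^* a).\<close>
definition gns_inner :: "('n::finite cmat \<Rightarrow> complex) \<Rightarrow> 'n cmat \<Rightarrow> 'n cmat \<Rightarrow> complex" where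
  "gns_inner \<tau> a b = \<tau> (madj b ** a)"

text \<open>Orthonormal basis a_1..a_m (indexed 0..m-1) of A w.r.t. the GNS inner product.\<close>
definition tau_orthonormal_basis ::
  "'n::finite cmat set \<Rightarrow> ('n cmat \<Rightarrow> complex) \<Rightarrow> (nat \<Rightarrow> 'n cmat) \<Rightarrow> nat \<Rightarrow> bool" where
  "tau_orthonormal_basis A \<tau> a m \<longleftrightarrow>
     (\<forall>j<m. a j \<in> A) \<and>
     (\<forall>j<m. \<forall>k<m. gns_inner \<tau> (a j) (a k) = (if j = k then 1 else 0)) \<and>
     (\<forall>x\<in>A. \<exists>c. x = (\<Sum>j<m. (\<chi> p q. c j * a j $ p $ q)))"

text \<open>Modular conjugation J on L^2(A,tau): J(x Omega) = x^* Omega; hence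
  (J a J)(x Omega) = x a^* Omega.  Left multiplication by a: x Omega \<mapsto> a x Omega.\<close>
definition modJ :: "'n::finite cmat \<Rightarrow> 'n cmat" where
  "modJ x = madj x"

definition JaJ :: "'n::finite cmat \<Rightarrow> 'n cmat \<Rightarrow> 'n cmat" where
  "JaJ a x = modJ (a ** modJ x)"

text \<open>Inner product on the (algebraic = Hilbert, finite-dim) tensor product
  L^2(A) \<otimes> L^2(A), extended sesquilinearly from simple tensors.\<close>
definition tensor_inner ::
  "('n::finite cmat \<Rightarrow> complex) \<Rightarrow> 'n cmat \<times> 'n cmat \<Rightarrow> 'n cmat \<times> 'n cmat \<Rightarrow> complex" where
  "tensor_inner \<tau> u v = gns_inner \<tau> (fst u) (fst v) * gns_inner \<tau> (snd u) (snd v)"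

text \<open>Quadratic form <T xi, xi> of T = sum_j J a_j J \<otimes> a_j at
  xi = sum_{k<N} x_k \<otimes> y_k, computed on simple tensors and extended by linearity.\<close>
definition quad_form ::
  "('n::finite cmat \<Rightarrow> complex) \<Rightarrow> (nat \<Rightarrow> 'n cmat) \<Rightarrow> nat \<Rightarrow> (nat \<Rightarrow> 'n cmat) \<Rightarrow> (nat \<Rightarrow> 'n cmat) \<Rightarrow> nat \<Rightarrow> complex" where
  "quad_form \<tau> a m x y N =
     (\<Sum>k<N. \<Sum>l<N. \<Sum>j<m.
        tensor_inner \<tau> (JaJ (a j) (x k), a j ** y k) (x l, y l))"

end

theory Submission
  imports Defs
begin

definition sm :: "complex \<Rightarrow> 'n::finite cmat \<Rightarrow> 'n cmat" where
  "sm c x = (\<chi> i j. c * x $ i $ j)"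

lemma mm_radd: "((B::'n::finite cmat) + C) ** A = B ** A + C ** A"
  by (simp add: matrix_matrix_mult_def vec_eq_iff distrib_right sum.distrib)

lemma mm_ladd: "(A::'n::finite cmat) ** (B + C) = A ** B + A ** C"
  by (rule matrix_add_ldistrib)

lemma mm_lzero: "(0::'n::finite cmat) ** A = 0"
  by (simp add: matrix_matrix_mult_def vec_eq_iff)

lemma mm_rzero: "(A::'n::finite cmat) ** 0 = 0"
  by (simp add: matrix_matrix_mult_def vec_eq_iff)

lemma mm_rsum: "(\<Sum>k\<in>S. (f k :: 'n::finite cmat)) ** (A::'n::finite cmat) = (\<Sum>k\<in>S. f k ** A)"
proof (induction S rule: infinite_finite_induct)
  case (insert x F)
  then show ?case using mm_radd[of "f x" "sum f F" A] by simp
qed (auto simp: mm_lzero)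

lemma mm_lsum: "(A::'n::finite cmat) ** (\<Sum>k\<in>S. (f k :: 'n cmat)) = (\<Sum>k\<in>S. A ** f k)"
  by (induction S rule: infinite_finite_induct) (auto simp: mm_rzero mm_ladd)

lemma madj_mult: "madj ((x::'n::finite cmat) ** y) = madj y ** madj x"
  by (simp add: madj_def matrix_matrix_mult_def vec_eq_iff mult.commute)

lemma madj_add: "madj ((x::'n::finite cmat) + y) = madj x + madj y"
  by (simp add: madj_def vec_eq_iff)

lemma madj_zero: "madj (0::'n::finite cmat) = 0"
  by (simp add: madj_def vec_eq_iff)

lemma madj_sum: "madj (\<Sum>k\<in>S. f k) = (\<Sum>k\<in>S. madj (f k::'n::finite cmat))"
  by (induction S rule: infinite_finite_induct) (auto simp: madj_zero madj_add)

lemma madj_sm_mult: "(x::'n::finite cmat) ** sm c y = sm c (x ** y)"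
  by (simp add: sm_def matrix_matrix_mult_def vec_eq_iff sum_distrib_left algebra_simps)

lemma sm_mult: "sm c (x::'n::finite cmat) ** y = sm c (x ** y)"
  by (simp add: sm_def matrix_matrix_mult_def vec_eq_iff sum_distrib_left algebra_simps)

context
  fixes A :: "'n::finite cmat set" and \<tau> :: "'n cmat \<Rightarrow> complex"
  assumes SA: "star_subalgebra A" and FT: "faithful_trace A \<tau>"
begin

lemma A0: "0 \<in> A" using SA by (simp add: star_subalgebra_def)
lemma Aadd: "x \<in> A \<Longrightarrow> y \<in> A \<Longrightarrow> x + y \<in> A" using SA by (simp add: star_subalgebra_def)
lemma Amul: "x \<in> A \<Longrightarrow> y \<in> A \<Longrightarrow> x ** y \<in> A" using SA by (simp add: star_subalgebra_def)
lemma Aadj: "x \<in> A \<Longrightarrow> madj x \<in> A" using SA by (simp add: star_subalgebra_def)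
lemma Asm: "x \<in> A \<Longrightarrow> sm c x \<in> A" using SA by (simp add: star_subalgebra_def sm_def)

lemma Asum: "(\<And>k. k \<in> S \<Longrightarrow> f k \<in> A) \<Longrightarrow> (\<Sum>k\<in>S. f k) \<in> A"
  by (induction S rule: infinite_finite_induct) (auto simp: A0 Aadd)

lemma tadd: "x \<in> A \<Longrightarrow> y \<in> A \<Longrightarrow> \<tau> (x + y) = \<tau> x + \<tau> y"
  using FT by (simp add: faithful_trace_def)
lemma tsm: "x \<in> A \<Longrightarrow> \<tau> (sm c x) = c * \<tau> x"
  using FT by (simp add: faithful_trace_def sm_def)
lemma ttr: "x \<in> A \<Longrightarrow> y \<in> A \<Longrightarrow> \<tau> (x ** y) = \<tau> (y ** x)"
  using FT by (simp add: faithful_trace_def)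
lemma tpos: "x \<in> A \<Longrightarrow> 0 \<le> \<tau> (madj x ** x)"
  using FT by (simp add: faithful_trace_def)
lemma t0: "\<tau> 0 = 0"
  using tadd[OF A0 A0] by simp

lemma tsum: "(\<And>k. k \<in> S \<Longrightarrow> f k \<in> A) \<Longrightarrow> \<tau> (\<Sum>k\<in>S. f k) = (\<Sum>k\<in>S. \<tau> (f k))"
proof (induction S rule: infinite_finite_induct)
  case (insert x F)
  then show ?case by (simp add: tadd Asum)
qed (auto simp: t0)

lemma expansion:
  assumes ON: "tau_orthonormal_basis A \<tau> a m" and z: "z \<in> A" and w: "w \<in> A"
  shows "(\<Sum>j<m. \<tau> (madj (a j) ** z) * \<tau> (w ** a j)) = \<tau> (w ** z)"
proof -
  have aA: "\<And>j. j < m \<Longrightarrow> a j \<in> A" using ON by (simp add: tau_orthonormal_basis_def)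
  have orth: "\<And>j k. j < m \<Longrightarrow> k < m \<Longrightarrow> \<tau> (madj (a k) ** a j) = (if j = k then 1 else 0)"
    using ON by (simp add: tau_orthonormal_basis_def gns_inner_def)
  obtain c where zc: "z = (\<Sum>j<m. sm (c j) (a j))"
    using ON z by (auto simp: tau_orthonormal_basis_def sm_def)
  have coef: "\<tau> (madj (a i) ** z) = c i" if i: "i < m" for i
  proof -
    have "\<tau> (madj (a i) ** z) = (\<Sum>j<m. \<tau> (madj (a i) ** sm (c j) (a j)))"
      unfolding zc mm_lsum by (rule tsum) (auto intro!: Amul Aadj aA Asm i)
    also have "\<dots> = (\<Sum>j<m. c j * \<tau> (madj (a i) ** a j))"
      by (rule sum.cong) (auto simp: madj_sm_mult intro!: tsm Amul Aadj aA i)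
    also have "\<dots> = (\<Sum>j<m. if j = i then c j else 0)"
      by (rule sum.cong) (auto simp: orth i)
    also have "\<dots> = c i" using i by simp
    finally show ?thesis .
  qed
  have "\<tau> (w ** z) = (\<Sum>j<m. \<tau> (w ** sm (c j) (a j)))"
    unfolding zc mm_lsum by (rule tsum) (auto intro!: Amul aA Asm w)
  also have "\<dots> = (\<Sum>j<m. c j * \<tau> (w ** a j))"
    by (rule sum.cong) (auto simp: madj_sm_mult intro!: tsm Amul aA w)
  also have "\<dots> = (\<Sum>j<m. \<tau> (madj (a j) ** z) * \<tau> (w ** a j))"
    by (rule sum.cong) (auto simp: coef)
  finally show ?thesis by simp
qed

end

theorem mainTheorem12:
  fixes A :: "'n::finite cmat set" and \<tau> :: "'n cmat \<Rightarrow> complex"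
    and a :: "nat \<Rightarrow> 'n cmat" and m :: nat
  assumes "star_subalgebra A"
    and "faithful_trace A \<tau>"
    and "tau_orthonormal_basis A \<tau> a m"
  shows "\<forall>N x y. (\<forall>k<N. x k \<in> A \<and> y k \<in> A) \<longrightarrow> 0 \<le> quad_form \<tau> a m x y N"
proof (intro allI impI)
  fix N :: nat and x y :: "nat \<Rightarrow> 'n cmat" assume xy: "\<forall>k<N. x k \<in> A \<and> y k \<in> A"
  note SA = assms(1) and FT = assms(2) and ON = assms(3)
  have aA: "\<And>j. j < m \<Longrightarrow> a j \<in> A" using ON by (simp add: tau_orthonormal_basis_def)
  have xA: "\<And>k. k < N \<Longrightarrow> x k \<in> A" and yA: "\<And>k. k < N \<Longrightarrow> y k \<in> A" using xy by auto
  note cl = Amul[OF SA FT] Aadj[OF SA FT]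
  define p where "p k = x k ** y k" for k
  have pA: "\<And>k. k < N \<Longrightarrow> p k \<in> A" unfolding p_def using xA yA cl by fast
  have tm: "(\<Sum>j<m. tensor_inner \<tau> (JaJ (a j) (x k), a j ** y k) (x l, y l))
      = \<tau> (madj (p l) ** p k)" if k: "k < N" and l: "l < N" for k l
  proof -
    have "(\<Sum>j<m. tensor_inner \<tau> (JaJ (a j) (x k), a j ** y k) (x l, y l))
      = (\<Sum>j<m. \<tau> (madj (a j) ** (madj (x l) ** x k)) * \<tau> ((y k ** madj (y l)) ** a j))"
    proof (rule sum.cong[OF refl])
      fix j assume "j \<in> {..<m}" hence j: "j < m" by simp
      have e1: "JaJ (a j) (x k) = x k ** madj (a j)"
        by (simp add: JaJ_def modJ_def madj_mult) (simp add: madj_def vec_eq_iff)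
      have f1: "\<tau> (madj (x l) ** (x k ** madj (a j))) = \<tau> (madj (a j) ** (madj (x l) ** x k))"
        apply (subst matrix_mul_assoc)
        by (rule ttr[OF SA FT]) (use cl xA yA aA j k l in fast)+
      have f2: "\<tau> (madj (y l) ** (a j ** y k)) = \<tau> ((y k ** madj (y l)) ** a j)"
      proof -
        have "\<tau> ((madj (y l) ** a j) ** y k) = \<tau> (y k ** (madj (y l) ** a j))"
          by (rule ttr[OF SA FT]) (use cl xA yA aA j k l in fast)+
        then show ?thesis by (simp add: matrix_mul_assoc)
      qed
      show "tensor_inner \<tau> (JaJ (a j) (x k), a j ** y k) (x l, y l) =
         \<tau> (madj (a j) ** (madj (x l) ** x k)) * \<tau> ((y k ** madj (y l)) ** a j)"
        unfolding tensor_inner_def gns_inner_def e1 using f1 f2 by simp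
    qed
    also have "\<dots> = \<tau> ((y k ** madj (y l)) ** (madj (x l) ** x k))"
      by (rule expansion[OF SA FT ON]) (use cl xA yA k l in fast)+
    also have "\<dots> = \<tau> (x k ** ((y k ** madj (y l)) ** madj (x l)))"
    proof -
      have "\<tau> (((y k ** madj (y l)) ** madj (x l)) ** x k) = \<tau> (x k ** ((y k ** madj (y l)) ** madj (x l)))"
        by (rule ttr[OF SA FT]) (auto intro!: cl xA yA k l)
      then show ?thesis by (simp add: matrix_mul_assoc)
    qed
    also have "\<dots> = \<tau> (p k ** madj (p l))"
      by (simp add: p_def madj_mult matrix_mul_assoc)
    also have "\<dots> = \<tau> (madj (p l) ** p k)"
      by (rule ttr[OF SA FT]) (use cl pA k l in fast)+
    finally show ?thesis .
  qed
  define S where "S = (\<Sum>k<N. p k)"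
  have SA': "S \<in> A" unfolding S_def by (rule Asum[OF SA FT]) (use pA in auto)
  have "quad_form \<tau> a m x y N = (\<Sum>k<N. \<Sum>l<N. \<tau> (madj (p l) ** p k))"
    unfolding quad_form_def by (rule sum.cong[OF refl], rule sum.cong[OF refl]) (simp add: tm)
  also have "\<dots> = \<tau> (madj S ** S)"
  proof -
    have "madj S ** S = (\<Sum>k<N. \<Sum>l<N. madj (p l) ** p k)"
      unfolding S_def madj_sum mm_rsum mm_lsum ..
    also have "\<tau> \<dots> = (\<Sum>k<N. \<tau> (\<Sum>l<N. madj (p l) ** p k))"
      by (rule tsum[OF SA FT], rule Asum[OF SA FT]) (use cl pA in auto)
    also have "\<dots> = (\<Sum>k<N. \<Sum>l<N. \<tau> (madj (p l) ** p k))"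
      by (rule sum.cong[OF refl], rule tsum[OF SA FT]) (use cl pA in auto)
    finally show ?thesis by simp
  qed
  finally show "0 \<le> quad_form \<tau> a m x y N" using tpos[OF SA FT SA'] by simp
qed

end
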